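(* Every EPS-graph is $1$-critical, but not $0$-critical.
   Context: All graphs are finite and simple; $\mathrm{Forb}(H)$ is the family of graphs with no induced subgraph isomorphic to $H$. $\mathcal{C}$ is the family of complete graphs; $\iota(J)$ is the family of graphs isomorphic to induced subgraphs of $J$; $\mathcal{F}_1\vee\mathcal{F}_2$ (resp. $\mathcal{F}_1\wedge\mathcal{F}_2$) is the family of disjoint unions (resp. joins) of a graph in $\mathcal{F}_1$ and a graph in $\mathcal{F}_2$; $S_2$ is the edgeless graph on $2$ vertices, $K_2$ an edge. $\mathcal{C}^+$ is the family of graphs $G$ that are complete or such that $G\setminus v$ is complete for some $v\in V(G)$ with $\deg(v)\le1$. The complement of a star $K_{1,m}$ is called the complement of a star. For a positive integer $l$, a graph $H$ is an $l$-EPS-graph if: (EPS1) for every $1\le s\le l$, $V(H)$ can be partitioned into $s$ stable sets and $l-s$ cliques; (EPS2) for each $\mathcal{G}\in\{\iota(S_2)\vee\mathcal{C},\iota(K_2)\vee\mathcal{C},\iota(S_2)\wedge\mathcal{C},\mathcal{C}^+\}$, $V(H)$ can be partitioned into $l-1$ cliques and a set inducing a graph in $\mathcal{G}$; (EPS3) there is no partition $(X_1,\dots,X_l)$ of $V(H)$ such that $H[X_1]$ is a clique or a complement of a star and $X_i$ is a clique for $2\le i\le l$. An EPS-graph is an $l$-EPS-graph for some $l$. $\mathcal{H}(s,t)$ is the family of graphs whose vertex set partitions into $s$ stable sets and $t$ cliques. For hereditary $\mathcal{F}$, $\chi_c(\mathcal{F})$ is the maximum $l$ with $\mathcal{H}(s,l-s)\subseteq\mathcal{F}$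 for some $0\le s\le l$. With $l=\chi_c(\mathcal{F})$, $J$ is $\mathcal{F}$-reduced if there is $0\le s\le l-1$ such that $\mathcal{F}$ contains every graph whose vertex set partitions into $l$ parts, one inducing a graph isomorphic to an induced subgraph of $J$, $s$ stable sets and $l-1-s$ cliques; $\mathrm{red}(\mathcal{F})$ is the family of $\mathcal{F}$-reduced graphs. A graph $G$ is an $s$-star if there is $S\subseteq V(G)$, $|S|\le s$, with $G-S$ complete or edgeless and every vertex of $S$ adjacent to all or none of $V(G)\setminus S$. A graph $H$ is $s$-critical if there is $n_0$ such that every $K\in\mathrm{red}(\mathrm{Forb}(H))$ with $|V(K)|\ge n_0$ is an $s$-star. *)

theory Defs
  imports Main
begin

text \<open>Finite simple graphs: a vertex set and a set of edges, each edge a 2-element set.\<close>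
type_synonym 'a graph = "'a set \<times> 'a set set"

definition verts :: "'a graph \<Rightarrow> 'a set" where "verts G = fst G"
definition edges :: "'a graph \<Rightarrow> 'a set set" where "edges G = snd G"

definition wf_graph :: "'a graph \<Rightarrow> bool" where
  "wf_graph G \<longleftrightarrow> finite (verts G) \<and>
     (\<forall>e\<in>edges G. \<exists>u v. u \<in> verts G \<and> v \<in> verts G \<and> u \<noteq> v \<and> e = {u, v})"

definition adj :: "'a graph \<Rightarrow> 'a \<Rightarrow> 'a \<Rightarrow> bool" where
  "adj G u v \<longleftrightarrow> u \<noteq> v \<and> {u, v} \<in> edges G"

definition clique :: "'a graph \<Rightarrow> 'a set \<Rightarrow> bool" where
  "clique G X \<longleftrightarrow> X \<subseteq> verts G \<and> (\<forall>u\<in>X. \<forall>v\<in>X. u \<noteq> v \<longrightarrow> adj G u v)"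

definition stable :: "'a graph \<Rightarrow> 'a set \<Rightarrow> bool" where
  "stable G X \<longleftrightarrow> X \<subseteq> verts G \<and> (\<forall>u\<in>X. \<forall>v\<in>X. \<not> adj G u v)"

definition induced :: "'a graph \<Rightarrow> 'a set \<Rightarrow> 'a graph" where
  "induced G X = (X, {e \<in> edges G. e \<subseteq> X})"

definition graph_iso :: "'a graph \<Rightarrow> 'b graph \<Rightarrow> bool" where
  "graph_iso G H \<longleftrightarrow> (\<exists>f. bij_betw f (verts G) (verts H) \<and>
      (\<forall>u\<in>verts G. \<forall>v\<in>verts G. adj G u v \<longleftrightarrow> adj H (f u) (f v)))"

text \<open>J contains an induced subgraph isomorphic to G (i.e. G is in iota(J)).\<close>
definition contains_induced :: "'a graph \<Rightarrow> 'b graph \<Rightarrow> bool" where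
  "contains_induced J G \<longleftrightarrow> (\<exists>Y \<subseteq> verts J. graph_iso (induced J Y) G)"

text \<open>The vertex subset W partitions into s stable sets and t cliques (empty parts allowed).\<close>
definition part_st :: "'a graph \<Rightarrow> 'a set \<Rightarrow> nat \<Rightarrow> nat \<Rightarrow> bool" where
  "part_st G W s t \<longleftrightarrow> (\<exists>f :: 'a \<Rightarrow> nat. (\<forall>v\<in>W. f v < s + t) \<and>
      (\<forall>i<s. stable G {v\<in>W. f v = i}) \<and>
      (\<forall>i. s \<le> i \<and> i < s + t \<longrightarrow> clique G {v\<in>W. f v = i}))"

text \<open>The four families of EPS2 (disjoint union / join expressed via vertex partitions).\<close>
definition fam_S2_or_C :: "'a graph \<Rightarrow> bool" where
  "fam_S2_or_C G \<longleftrightarrow> (\<exists>A B. A \<inter> B = {} \<and> A \<union> B = verts G \<and> stable G A \<and> card A \<le> 2 \<and>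
      clique G B \<and> (\<forall>a\<in>A. \<forall>b\<in>B. \<not> adj G a b))"

definition fam_K2_or_C :: "'a graph \<Rightarrow> bool" where
  "fam_K2_or_C G \<longleftrightarrow> (\<exists>A B. A \<inter> B = {} \<and> A \<union> B = verts G \<and> clique G A \<and> card A \<le> 2 \<and>
      clique G B \<and> (\<forall>a\<in>A. \<forall>b\<in>B. \<not> adj G a b))"

definition fam_S2_join_C :: "'a graph \<Rightarrow> bool" where
  "fam_S2_join_C G \<longleftrightarrow> (\<exists>A B. A \<inter> B = {} \<and> A \<union> B = verts G \<and> stable G A \<and> card A \<le> 2 \<and>
      clique G B \<and> (\<forall>a\<in>A. \<forall>b\<in>B. adj G a b))"

definition fam_Cplus :: "'a graph \<Rightarrow> bool" where
  "fam_Cplus G \<longleftrightarrow> clique G (verts G) \<or>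
     (\<exists>v\<in>verts G. clique G (verts G - {v}) \<and> card {u\<in>verts G. adj G v u} \<le> 1)"

definition co_star :: "'a graph \<Rightarrow> bool" where
  "co_star G \<longleftrightarrow> (\<exists>v\<in>verts G. clique G (verts G - {v}) \<and> (\<forall>u\<in>verts G. \<not> adj G v u))"

definition EPS2_part :: "('a graph \<Rightarrow> bool) \<Rightarrow> nat \<Rightarrow> 'a graph \<Rightarrow> bool" where
  "EPS2_part P l H \<longleftrightarrow> (\<exists>X \<subseteq> verts H. P (induced H X) \<and> part_st H (verts H - X) 0 (l - 1))"

definition l_EPS :: "nat \<Rightarrow> 'a graph \<Rightarrow> bool" where
  "l_EPS l H \<longleftrightarrow> l \<ge> 1 \<and>
     (\<forall>s. 1 \<le> s \<and> s \<le> l \<longrightarrow> part_st H (verts H) s (l - s)) \<and>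
     EPS2_part fam_S2_or_C l H \<and> EPS2_part fam_K2_or_C l H \<and>
     EPS2_part fam_S2_join_C l H \<and> EPS2_part fam_Cplus l H \<and>
     \<not> (\<exists>f :: 'a \<Rightarrow> nat. (\<forall>v\<in>verts H. f v < l) \<and>
          (clique H {v\<in>verts H. f v = 0} \<or> co_star (induced H {v\<in>verts H. f v = 0})) \<and>
          (\<forall>i. 1 \<le> i \<and> i < l \<longrightarrow> clique H {v\<in>verts H. f v = i}))"

definition EPS_graph :: "'a graph \<Rightarrow> bool" where
  "EPS_graph H \<longleftrightarrow> (\<exists>l. l_EPS l H)"

text \<open>Families of graphs are sets of graphs on vertex type nat (every finite graph has such a copy).\<close>
definition Forb :: "'a graph \<Rightarrow> nat graph set" where
  "Forb H = {G. wf_graph G \<and> \<not> contains_induced G H}"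

definition H_st :: "nat \<Rightarrow> nat \<Rightarrow> nat graph set" where
  "H_st s t = {G. wf_graph G \<and> part_st G (verts G) s t}"

definition chi_c :: "nat graph set \<Rightarrow> nat" where
  "chi_c F = (GREATEST l. \<exists>s\<le>l. H_st s (l - s) \<subseteq> F)"

definition reduced :: "nat graph set \<Rightarrow> nat graph \<Rightarrow> bool" where
  "reduced F J \<longleftrightarrow> (let l = chi_c F in \<exists>s. s + 1 \<le> l \<and>
     (\<forall>G. wf_graph G \<and> (\<exists>X \<subseteq> verts G. contains_induced J (induced G X) \<and>
            part_st G (verts G - X) s (l - 1 - s)) \<longrightarrow> G \<in> F))"

definition red :: "nat graph set \<Rightarrow> nat graph set" where
  "red F = {J. wf_graph J \<and> reduced F J}"

definition s_star :: "nat \<Rightarrow> 'a graph \<Rightarrow> bool" where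
  "s_star s G \<longleftrightarrow> (\<exists>S \<subseteq> verts G. card S \<le> s \<and>
     (clique G (verts G - S) \<or> stable G (verts G - S)) \<and>
     (\<forall>x\<in>S. (\<forall>y\<in>verts G - S. adj G x y) \<or> (\<forall>y\<in>verts G - S. \<not> adj G x y)))"

definition critical :: "nat \<Rightarrow> 'a graph \<Rightarrow> bool" where
  "critical s H \<longleftrightarrow> (\<exists>n0. \<forall>K\<in>red (Forb H). card (verts K) \<ge> n0 \<longrightarrow> s_star s K)"

end

theory Submission imports "HOL-Library.Ramsey" Defs begin

lemma verts_induced[simp]: "verts (induced G X) = X"
  by (simp add: verts_def induced_def)

lemma adj_induced: "u \<in> X \<Longrightarrow> v \<in> X \<Longrightarrow> adj (induced G X) u v \<longleftrightarrow> adj G u v"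
  by (auto simp: adj_def induced_def edges_def)

lemma adj_sym: "adj G u v \<longleftrightarrow> adj G v u"
  by (auto simp: adj_def insert_commute)

lemma adj_irrefl[simp]: "\<not> adj G u u"
  by (simp add: adj_def)

definition emb :: "'a graph \<Rightarrow> 'b graph \<Rightarrow> ('a \<Rightarrow> 'b) \<Rightarrow> bool" where
  "emb G J g \<longleftrightarrow> inj_on g (verts G) \<and> g ` verts G \<subseteq> verts J \<and>
     (\<forall>u\<in>verts G. \<forall>v\<in>verts G. adj G u v \<longleftrightarrow> adj J (g u) (g v))"

lemma contains_iff: "contains_induced J G \<longleftrightarrow> (\<exists>g. emb G J g)"
proof
  assume "contains_induced J G"
  then obtain Y f where Y: "Y \<subseteq> verts J" and b: "bij_betw f Y (verts G)"
    and a: "\<forall>u\<in>Y. \<forall>v\<in>Y. adj (induced J Y) u v \<longleftrightarrow> adj G (f u) (f v)"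
    unfolding contains_induced_def graph_iso_def verts_induced by blast
  define g where "g = inv_into Y f"
  have b2: "bij_betw g (verts G) Y" using b by (simp add: g_def bij_betw_inv_into)
  have "emb G J g"
    unfolding emb_def
  proof (intro conjI ballI)
    show "inj_on g (verts G)" using b2 by (simp add: bij_betw_def)
    show "g ` verts G \<subseteq> verts J" using b2 Y by (simp add: bij_betw_def)
  next
    fix u v assume u: "u \<in> verts G" and v: "v \<in> verts G"
    have gu: "g u \<in> Y" "g v \<in> Y" using b2 u v by (meson bij_betwE)+
    have fg: "f (g u) = u" "f (g v) = v" using b u v by (simp_all add: g_def bij_betw_inv_into_right)
    have 1: "adj (induced J Y) (g u) (g v) \<longleftrightarrow> adj J (g u) (g v)" by (rule adj_induced[OF gu])
    have 2: "adj (induced J Y) (g u) (g v) \<longleftrightarrow> adj G (f (g u)) (f (g v))" using a[rule_format, OF gu] .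
    show "adj G u v \<longleftrightarrow> adj J (g u) (g v)" using 1 2 fg by simp
  qed
  then show "\<exists>g. emb G J g" by blast
next
  assume "\<exists>g. emb G J g"
  then obtain g where e: "emb G J g" by blast
  define Y where "Y = g ` verts G"
  have inj: "inj_on g (verts G)" using e by (simp add: emb_def)
  have bg: "bij_betw g (verts G) Y" using inj by (simp add: Y_def inj_on_imp_bij_betw)
  have b: "bij_betw (inv_into (verts G) g) Y (verts G)"
    using bg by (rule bij_betw_inv_into)
  have "graph_iso (induced J Y) G"
    unfolding graph_iso_def
  proof (intro exI conjI ballI)
    show "bij_betw (inv_into (verts G) g) (verts (induced J Y)) (verts G)" using b by simp
  next
    fix u v assume "u \<in> verts (induced J Y)" "v \<in> verts (induced J Y)"
    then obtain x y where x: "x \<in> verts G" "u = g x" and y: "y \<in> verts G" "v = g y"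
      unfolding Y_def verts_induced by blast
    have ix: "inv_into (verts G) g u = x" "inv_into (verts G) g v = y"
      using inj x y by (simp_all add: inv_into_f_f)
    have uY: "u \<in> Y" "v \<in> Y" using x y by (simp_all add: Y_def)
    have 1: "adj (induced J Y) u v \<longleftrightarrow> adj J u v"
      by (rule adj_induced[OF uY])
    have 2: "adj G x y \<longleftrightarrow> adj J (g x) (g y)" using e x(1) y(1) unfolding emb_def by simp
    show "adj (induced J Y) u v \<longleftrightarrow> adj G (inv_into (verts G) g u) (inv_into (verts G) g v)"
      using 1 2 ix x y by simp
  qed
  moreover have "Y \<subseteq> verts J" using e by (auto simp: Y_def emb_def)
  ultimately show "contains_induced J G" unfolding contains_induced_def by blast
qed

lemma emb_comp: "emb G J g \<Longrightarrow> emb J K k \<Longrightarrow> emb G K (k \<circ> g)"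
  unfolding emb_def
  apply (intro conjI)
    apply (metis comp_inj_on inj_on_subset)
   apply (simp add: image_comp[symmetric]; blast)
  apply (simp add: image_subset_iff)
  done

lemma emb_restrict: "emb G J g \<Longrightarrow> W \<subseteq> verts G \<Longrightarrow> g ` W \<subseteq> Z \<Longrightarrow> Z \<subseteq> verts J \<Longrightarrow>
   emb (induced G W) (induced J Z) g"
proof -
  assume e: "emb G J g" and W: "W \<subseteq> verts G" and gW: "g ` W \<subseteq> Z" and Z: "Z \<subseteq> verts J"
  show ?thesis unfolding emb_def
  proof (intro conjI ballI)
    show "inj_on g (verts (induced G W))" using e W unfolding emb_def by (auto intro: inj_on_subset)
    show "g ` verts (induced G W) \<subseteq> verts (induced J Z)" using gW by simp
  next
    fix u v assume u: "u \<in> verts (induced G W)" and v: "v \<in> verts (induced G W)"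
    then have "u \<in> W" "v \<in> W" by auto
    moreover have "g u \<in> Z" "g v \<in> Z" using gW calculation by auto
    ultimately show "adj (induced G W) u v \<longleftrightarrow> adj (induced J Z) (g u) (g v)"
      using e W by (simp add: adj_induced emb_def subset_iff)
  qed
qed

lemma emb_restrict1: "emb G J g \<Longrightarrow> W \<subseteq> verts G \<Longrightarrow> emb (induced G W) J g"
  unfolding emb_def apply (elim conjE) apply (intro conjI)
    apply (simp add: inj_on_subset)
   apply auto[1]
  apply (simp add: adj_induced subset_iff)
  done

lemma emb_inv: "emb G J g \<Longrightarrow> g ` verts G = verts J \<Longrightarrow> emb J G (inv_into (verts G) g)"
  unfolding emb_def
  apply (intro conjI)
    apply (metis inj_on_inv_into order_refl)
   apply (metis image_subsetI inv_into_into)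
  apply (metis f_inv_into_f inv_into_into)
  done

lemma contains_emb: "emb G J g \<Longrightarrow> contains_induced J G"
  using contains_iff by blast

lemma stable_pull: "emb G H g \<Longrightarrow> stable H S \<Longrightarrow> stable G {v\<in>verts G. g v \<in> S}"
  unfolding emb_def stable_def by auto

lemma clique_pull: "emb G H g \<Longrightarrow> clique H S \<Longrightarrow> clique G {v\<in>verts G. g v \<in> S}"
  unfolding emb_def clique_def by (auto dest: inj_onD)

lemma part_pull:
  assumes e: "emb G H g" and p: "part_st H W s t"
  shows "part_st G {v\<in>verts G. g v \<in> W} s t"
proof -
  obtain f where f: "\<forall>v\<in>W. f v < s + t" "\<forall>i<s. stable H {v\<in>W. f v = i}"
     "\<forall>i. s \<le> i \<and> i < s + t \<longrightarrow> clique H {v\<in>W. f v = i}"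
    using p by (auto simp: part_st_def)
  have eq: "\<And>i. {v \<in> {v\<in>verts G. g v \<in> W}. (f \<circ> g) v = i} = {v\<in>verts G. g v \<in> {v\<in>W. f v = i}}"
    by auto
  show ?thesis unfolding part_st_def
  proof (intro exI[of _ "f \<circ> g"] conjI allI impI ballI)
    fix v assume "v \<in> {v\<in>verts G. g v \<in> W}" then show "(f \<circ> g) v < s+t" using f by auto
  next
    fix i assume "i<s"
    then have "stable G {v\<in>verts G. g v \<in> {v\<in>W. f v = i}}" using f stable_pull[OF e] by blast
    then show "stable G {v \<in> {v\<in>verts G. g v \<in> W}. (f \<circ> g) v = i}"
      by (simp only: eq)
  next
    fix i assume "s \<le> i \<and> i < s + t"
    then have "clique G {v\<in>verts G. g v \<in> {v\<in>W. f v = i}}" using f clique_pull[OF e] by blast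
    then show "clique G {v \<in> {v\<in>verts G. g v \<in> W}. (f \<circ> g) v = i}"
      by (simp only: eq)
  qed
qed

lemma nat_copy:
  assumes fin: "finite (verts H)"
  obtains H' :: "nat graph" and \<psi> where "wf_graph H'" "emb H' H \<psi>" "\<psi> ` verts H' = verts H"
proof -
  obtain \<psi> where b: "bij_betw \<psi> {0..<card (verts H)} (verts H)"
    using ex_bij_betw_nat_finite[OF fin] by blast
  define n where "n = card (verts H)"
  define H' :: "nat graph" where "H' = ({0..<n}, {{i,j} | i j. i < n \<and> j < n \<and> adj H (\<psi> i) (\<psi> j)})"
  have vH': "verts H' = {0..<n}" by (simp add: H'_def verts_def)
  have eH': "edges H' = {{i,j} | i j. i < n \<and> j < n \<and> adj H (\<psi> i) (\<psi> j)}" by (simp add: H'_def edges_def)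
  have adjH': "adj H' i j \<longleftrightarrow> adj H (\<psi> i) (\<psi> j)" if "i < n" "j < n" for i j
  proof
    assume "adj H' i j"
    then obtain a b where "{i,j} = {a,b}" "adj H (\<psi> a) (\<psi> b)"
      by (auto simp: adj_def eH')
    then show "adj H (\<psi> i) (\<psi> j)" by (metis adj_sym doubleton_eq_iff)
  next
    assume a: "adj H (\<psi> i) (\<psi> j)"
    then have "i \<noteq> j" by auto
    then show "adj H' i j" using a that by (auto simp: adj_def eH')
  qed
  have "wf_graph H'"
    unfolding wf_graph_def vH' eH'
    by (auto simp: adj_def)
  moreover have "emb H' H \<psi>"
    unfolding emb_def vH' using b adjH' by (auto simp: n_def bij_betw_def)
  moreover have "\<psi> ` verts H' = verts H" using b by (simp add: vH' n_def bij_betw_def)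
  ultimately show ?thesis using that by blast
qed

lemma stable_empty: "stable G {}" by (simp add: stable_def)
lemma clique_empty: "clique G {}" by (simp add: clique_def)

lemma part_mono:
  assumes p: "part_st G W s t" and le: "s \<le> s'" "t \<le> t'"
  shows "part_st G W s' t'"
proof -
  obtain f where f: "\<forall>v\<in>W. f v < s + t" "\<forall>i<s. stable G {v\<in>W. f v = i}"
     "\<forall>i. s \<le> i \<and> i < s + t \<longrightarrow> clique G {v\<in>W. f v = i}"
    using p by (auto simp: part_st_def)
  define f' where "f' v = (if f v < s then f v else f v + (s' - s))" for v
  show ?thesis unfolding part_st_def
  proof (intro exI[of _ f'] conjI allI impI ballI)
    fix v assume "v \<in> W" then show "f' v < s' + t'" using f le by (auto simp: f'_def)
  next
    fix i assume i: "i < s'"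
    show "stable G {v\<in>W. f' v = i}"
    proof (cases "i < s")
      case True
      then have "{v\<in>W. f' v = i} = {v\<in>W. f v = i}" using le by (auto simp: f'_def)
      then show ?thesis using f True by simp
    next
      case False
      then have "{v\<in>W. f' v = i} = {}" using le i by (auto simp: f'_def)
      then show ?thesis by (metis stable_empty)
    qed
  next
    fix i assume i: "s' \<le> i \<and> i < s' + t'"
    show "clique G {v\<in>W. f' v = i}"
    proof (cases "i - (s' - s) < s + t")
      case True
      then have "{v\<in>W. f' v = i} = {v\<in>W. f v = i - (s' - s)}" using le i by (auto simp: f'_def)
      moreover have "s \<le> i - (s' - s)" using i le by arith
      ultimately show ?thesis using f True by metis
    next
      case False
      then have "{v\<in>W. f' v = i} = {}" using le i f by (auto simp: f'_def)
      then show ?thesis by (metis clique_empty)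
    qed
  qed
qed

lemma part_remove:
  assumes f: "\<forall>v\<in>W. f v < a + b" "\<forall>i<a. stable G {v\<in>W. f v = i}"
     "\<forall>i. a \<le> i \<and> i < a + b \<longrightarrow> clique G {v\<in>W. f v = i}"
    and ab: "a + b = s + t + 1" "s \<le> a" "a \<le> s + 1"
  shows "part_st G (W - {v\<in>W. f v = s}) s t"
proof -
  define f' where "f' v = (if f v < s then f v else f v - 1)" for v
  show ?thesis unfolding part_st_def
  proof (intro exI[of _ f'] conjI allI impI ballI)
    fix v assume "v \<in> W - {v\<in>W. f v = s}" then show "f' v < s + t" using f ab by (auto simp: f'_def)
  next
    fix i assume i: "i < s"
    then have "{v \<in> W - {v\<in>W. f v = s}. f' v = i} = {v\<in>W. f v = i}" by (auto simp: f'_def)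
    then show "stable G {v \<in> W - {v\<in>W. f v = s}. f' v = i}" using f i ab by simp
  next
    fix i assume i: "s \<le> i \<and> i < s + t"
    then have "{v \<in> W - {v\<in>W. f v = s}. f' v = i} = {v\<in>W. f v = i + 1}" by (auto simp: f'_def)
    then show "clique G {v \<in> W - {v\<in>W. f v = s}. f' v = i}" using f i ab by simp
  qed
qed

lemma clique_induced: "X \<subseteq> verts H \<Longrightarrow> clique (induced H X) Y \<Longrightarrow> clique H Y"
  unfolding clique_def by (auto simp: adj_induced subset_iff)

lemma stable_induced: "X \<subseteq> verts H \<Longrightarrow> stable (induced H X) Y \<Longrightarrow> stable H Y"
  unfolding stable_def by (auto simp: adj_induced subset_iff)

lemma clique_sub: "clique G X \<Longrightarrow> Y \<subseteq> X \<Longrightarrow> clique G Y"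
  unfolding clique_def by auto

lemma not_all_cliques:
  assumes "l_EPS l H" shows "\<not> part_st H (verts H) 0 l"
proof
  assume "part_st H (verts H) 0 l"
  then obtain f where f: "\<forall>v\<in>verts H. f v < l"
     "\<forall>i. i < l \<longrightarrow> clique H {v\<in>verts H. f v = i}"
    by (auto simp: part_st_def)
  have "l \<ge> 1" using assms by (simp add: l_EPS_def)
  then have "(\<forall>v\<in>verts H. f v < l) \<and>
          (clique H {v\<in>verts H. f v = 0} \<or> co_star (induced H {v\<in>verts H. f v = 0})) \<and>
          (\<forall>i. 1 \<le> i \<and> i < l \<longrightarrow> clique H {v\<in>verts H. f v = i})" using f by auto
  then show False using assms unfolding l_EPS_def by blast
qed

lemma Cplus_part:
  assumes eps: "l_EPS l H"
  shows "part_st H (verts H) 0 (l + 1)"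
proof -
  have l1: "l \<ge> 1" using eps by (simp add: l_EPS_def)
  obtain X where X: "X \<subseteq> verts H" "fam_Cplus (induced H X)" "part_st H (verts H - X) 0 (l - 1)"
    using eps by (auto simp: l_EPS_def EPS2_part_def)
  obtain f where f: "\<forall>v\<in>verts H - X. f v < l - 1"
     "\<forall>i. i < l - 1 \<longrightarrow> clique H {v\<in>verts H - X. f v = i}"
    using X(3) by (auto simp: part_st_def)
  obtain v where v: "(clique H X \<and> v = undefined) \<or> (v \<in> X \<and> clique H (X - {v}))"
    using X(1,2) clique_induced[OF X(1)] by (auto simp: fam_Cplus_def)
  define c where "c = clique H X"
  define f' where "f' w = (if w \<in> X then (if \<not> c \<and> w = v then l else l - 1) else f w)" for w
  have "part_st H (verts H) 0 (l + 1)"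
    unfolding part_st_def
  proof (intro exI[of _ f'] conjI allI impI ballI)
    fix w assume w: "w \<in> verts H"
    show "f' w < 0 + (l + 1)"
    proof (cases "w \<in> X")
      case True then show ?thesis by (auto simp: f'_def)
    next
      case False then have "f w < l - 1" using f w by blast
      then show ?thesis using False by (simp add: f'_def)
    qed
  next
    fix i :: nat assume "i < 0" then show "stable H {w \<in> verts H. f' w = i}" by simp
  next
    fix i assume i: "0 \<le> i \<and> i < 0 + (l + 1)"
    consider "i < l - 1" | "i = l - 1" | "i = l" using i l1 by linarith
    then show "clique H {w \<in> verts H. f' w = i}"
    proof cases
      case 1
      then have "{w \<in> verts H. f' w = i} = {w\<in>verts H - X. f w = i}" using l1
        by (auto simp: f'_def)
      then show ?thesis using f 1 by simp
    next
      case 2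
      have "{w \<in> verts H. f' w = i} \<subseteq> (if c then X else X - {v})"
      proof
        fix w assume w: "w \<in> {w \<in> verts H. f' w = i}"
        have "w \<in> X"
        proof (rule ccontr)
          assume "w \<notin> X" then have "f w < l - 1" using f w by auto
          with w 2 \<open>w \<notin> X\<close> show False by (simp add: f'_def)
        qed
        show "w \<in> (if c then X else X - {v})"
        proof (cases c)
          case True then show ?thesis using \<open>w \<in> X\<close> by simp
        next
          case False
          have "w \<noteq> v"
          proof
            assume "w = v" then have "f' w = l" using False \<open>w \<in> X\<close> by (simp add: f'_def)
            with w 2 have "l - 1 = l" by simp
            with l1 show False by arith
          qed
          then show ?thesis using False \<open>w \<in> X\<close> by simp
        qed
      qed
      moreover have "clique H (if c then X else X - {v})" using v c_def by auto
      ultimately show ?thesis by (meson clique_sub)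
    next
      case 3
      have "{w \<in> verts H. f' w = i} \<subseteq> (if c then {} else {v})"
      proof
        fix w assume w: "w \<in> {w \<in> verts H. f' w = i}"
        have "w \<in> X"
        proof (rule ccontr)
          assume "w \<notin> X" then have "f w < l - 1" using f w by auto
          with w 3 \<open>w \<notin> X\<close> show False by (simp add: f'_def)
        qed
        have "f' w = l" using w 3 by simp
        show "w \<in> (if c then {} else {v})"
        proof (cases "\<not> c \<and> w = v")
          case True then show ?thesis by simp
        next
          case False
          then have "f' w = l - 1" using \<open>w \<in> X\<close> unfolding f'_def by auto
          with \<open>f' w = l\<close> have "l - 1 = l" by simp
          with l1 show ?thesis by arith
        qed
      qed
      moreover have "clique H (if c then {} else {v})" using v c_def X(1)
        by (auto simp: clique_def)
      ultimately show ?thesis by (meson clique_sub)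
    qed
  qed
  then show ?thesis .
qed

lemma chi_c_eq:
  assumes wf: "wf_graph H" and eps: "l_EPS l H"
  shows "chi_c (Forb H) = l"
  unfolding chi_c_def
proof (rule Greatest_equality)
  have "H_st 0 l \<subseteq> Forb H"
  proof
    fix G assume "G \<in> H_st 0 l"
    then have G: "wf_graph G" "part_st G (verts G) 0 l" by (auto simp: H_st_def)
    have "\<not> contains_induced G H"
    proof
      assume "contains_induced G H"
      then obtain g where g: "emb H G g" using contains_iff by blast
      have "{v\<in>verts H. g v \<in> verts G} = verts H" using g by (auto simp: emb_def)
      then have "part_st H (verts H) 0 l" using part_pull[OF g G(2)] by simp
      then show False using not_all_cliques[OF eps] by simp
    qed
    then show "G \<in> Forb H" using G by (simp add: Forb_def)
  qed
  then show "\<exists>s\<le>l. H_st s (l - s) \<subseteq> Forb H" by (intro exI[of _ 0]) simp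
next
  fix y assume "\<exists>s\<le>y. H_st s (y - s) \<subseteq> Forb H"
  then obtain s where s: "s \<le> y" "H_st s (y - s) \<subseteq> Forb H" by blast
  show "y \<le> l"
  proof (rule ccontr)
    assume "\<not> y \<le> l"
    then have yl: "l < y" by simp
    have fin: "finite (verts H)" using wf by (simp add: wf_graph_def)
    obtain H' :: "nat graph" and \<psi> where H': "wf_graph H'" "emb H' H \<psi>" "\<psi> ` verts H' = verts H"
      using nat_copy[OF fin] by blast
    have l1: "l \<ge> 1" using eps by (simp add: l_EPS_def)
    have P: "part_st H (verts H) s (y - s)"
    proof -
      consider "s = 0" | "1 \<le> s \<and> s \<le> l" | "l < s" by linarith
      then show ?thesis
      proof cases
        case 1 then show ?thesis using Cplus_part[OF eps] part_mono yl by fastforce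
      next
        case 2
        then have "part_st H (verts H) s (l - s)" using eps by (simp add: l_EPS_def)
        then show ?thesis using part_mono yl by fastforce
      next
        case 3
        have "\<forall>s. 1 \<le> s \<and> s \<le> l \<longrightarrow> part_st H (verts H) s (l - s)" using eps by (simp add: l_EPS_def)
        then have "part_st H (verts H) l (l - l)" using l1 by blast
        then show ?thesis using part_mono 3 by fastforce
      qed
    qed
    have "{v\<in>verts H'. \<psi> v \<in> verts H} = verts H'" using H' by (auto simp: emb_def)
    then have "part_st H' (verts H') s (y - s)" using part_pull[OF H'(2) P] by simp
    then have "H' \<in> Forb H" using s H' by (auto simp: H_st_def)
    moreover have "contains_induced H' H" using emb_inv[OF H'(2,3)] contains_emb by blast
    ultimately show False by (simp add: Forb_def)
  qed
qed

lemma emb_small: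
  assumes A: "A \<subseteq> verts G" "finite A" and T: "finite T" "card A \<le> card T" "T \<subseteq> verts J"
    and cs: "(clique G A \<and> clique J T) \<or> (stable G A \<and> stable J T)"
  shows "\<exists>g. emb (induced G A) J g \<and> g ` A \<subseteq> T"
proof -
  obtain g where g: "g ` A \<subseteq> T" "inj_on g A" using card_le_inj[OF A(2) T(1,2)] by blast
  have "emb (induced G A) J g"
    unfolding emb_def
  proof (intro conjI ballI)
    show "inj_on g (verts (induced G A))" using g by simp
    show "g ` verts (induced G A) \<subseteq> verts J" using g T by auto
  next
    fix u v assume u: "u \<in> verts (induced G A)" and v: "v \<in> verts (induced G A)"
    then have uv: "u \<in> A" "v \<in> A" by auto
    then have gu: "g u \<in> T" "g v \<in> T" using g by auto
    have e: "adj (induced G A) u v \<longleftrightarrow> adj G u v" using adj_induced[OF uv] .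
    show "adj (induced G A) u v \<longleftrightarrow> adj J (g u) (g v)"
    proof (cases "u = v")
      case True then show ?thesis by simp
    next
      case False
      then have "g u \<noteq> g v" using g(2) uv by (meson inj_onD)
      show ?thesis
      proof (cases "clique G A \<and> clique J T")
        case True
        then have "adj G u v" "adj J (g u) (g v)" using False \<open>g u \<noteq> g v\<close> uv gu
          unfolding clique_def by auto
        then show ?thesis using e by simp
      next
        case F: False
        then have "stable G A \<and> stable J T" using cs by blast
        then have "\<not> adj G u v" "\<not> adj J (g u) (g v)" using uv gu
          unfolding stable_def by auto
        then show ?thesis using e by simp
      qed
    qed
  qed
  then show ?thesis using g by blast
qed

lemma emb_union:
  assumes V: "verts G = A \<union> B" "A \<inter> B = {}"
    and eA: "emb (induced G A) J gA" and eB: "emb (induced G B) J gB"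
    and disj: "gA ` A \<inter> gB ` B = {}"
    and cross: "\<forall>a\<in>A. \<forall>b\<in>B. adj G a b \<longleftrightarrow> adj J (gA a) (gB b)"
  shows "emb G J (\<lambda>x. if x \<in> A then gA x else gB x)"
proof -
  have iA: "inj_on gA A" and iB: "inj_on gB B" using eA eB by (simp_all add: emb_def)
  have sA: "gA ` A \<subseteq> verts J" and sB: "gB ` B \<subseteq> verts J" using eA eB by (simp_all add: emb_def)
  have aA: "adj G u v \<longleftrightarrow> adj J (gA u) (gA v)" if "u \<in> A" "v \<in> A" for u v
  proof -
    have "adj (induced G A) u v \<longleftrightarrow> adj J (gA u) (gA v)" using eA that unfolding emb_def by simp
    then show ?thesis using adj_induced[OF that] by simp
  qed
  have aB: "adj G u v \<longleftrightarrow> adj J (gB u) (gB v)" if "u \<in> B" "v \<in> B" for u v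
  proof -
    have "adj (induced G B) u v \<longleftrightarrow> adj J (gB u) (gB v)" using eB that unfolding emb_def by simp
    then show ?thesis using adj_induced[OF that] by simp
  qed
  show ?thesis
    unfolding emb_def
  proof (intro conjI ballI)
    show "inj_on (\<lambda>x. if x \<in> A then gA x else gB x) (verts G)"
      unfolding inj_on_def
    proof (intro ballI impI)
      fix x y assume x: "x \<in> verts G" and y: "y \<in> verts G"
        and eq: "(if x \<in> A then gA x else gB x) = (if y \<in> A then gA y else gB y)"
      show "x = y"
      proof (cases "x \<in> A"; cases "y \<in> A")
        assume "x \<in> A" "y \<in> A" then show ?thesis using eq iA by (simp add: inj_on_def)
      next
        assume a: "x \<in> A" "y \<notin> A"
        then have "y \<in> B" using y V by auto
        have "gA x = gB y" using a eq by simp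
        then have "gA x \<in> gA ` A \<inter> gB ` B" using a \<open>y \<in> B\<close> by (metis IntI image_eqI)
        then show ?thesis using disj by auto
      next
        assume a: "x \<notin> A" "y \<in> A"
        then have "x \<in> B" using x V by auto
        have "gA y = gB x" using a eq by simp
        then have "gA y \<in> gA ` A \<inter> gB ` B" using a \<open>x \<in> B\<close> by (metis IntI image_eqI)
        then show ?thesis using disj by auto
      next
        assume a: "x \<notin> A" "y \<notin> A"
        then have "x \<in> B" "y \<in> B" using x y V by auto
        then show ?thesis using eq iB a by (simp add: inj_on_def)
      qed
    qed
    show "(\<lambda>x. if x \<in> A then gA x else gB x) ` verts G \<subseteq> verts J"
      using sA sB V by auto
  next
    fix u v assume u: "u \<in> verts G" and v: "v \<in> verts G"
    show "adj G u v \<longleftrightarrow> adj J (if u \<in> A then gA u else gB u) (if v \<in> A then gA v else gB v)"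
    proof (cases "u \<in> A"; cases "v \<in> A")
      assume a: "u \<in> A" "v \<in> A" then show ?thesis using aA by simp
    next
      assume a: "u \<in> A" "v \<notin> A"
      then have "v \<in> B" using v V by auto
      then show ?thesis using a cross by simp
    next
      assume a: "u \<notin> A" "v \<in> A"
      then have "u \<in> B" using u V by auto
      then have "adj G v u \<longleftrightarrow> adj J (gA v) (gB u)" using a cross by simp
      then show ?thesis using a by (simp add: adj_sym)
    next
      assume a: "u \<notin> A" "v \<notin> A"
      then have "u \<in> B" "v \<in> B" using u v V by auto
      then show ?thesis using a aB by simp
    qed
  qed
qed

lemma fam_embed:
  assumes V: "verts G = A \<union> B" "A \<inter> B = {}" "finite (verts G)"
    and Bc: "clique G B" and AT: "(clique G A \<and> clique J T) \<or> (stable G A \<and> stable J T)"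
    and cAT: "card A \<le> card T" and cBC: "card B \<le> card C"
    and T: "T \<subseteq> verts J" "finite T" and C: "clique J C" "finite C" and TC: "T \<inter> C = {}"
    and cr1: "\<forall>a\<in>A. \<forall>b\<in>B. adj G a b \<longleftrightarrow> \<beta>"
    and cr2: "\<forall>t\<in>T. \<forall>c\<in>C. adj J t c \<longleftrightarrow> \<beta>"
  shows "contains_induced J G"
proof -
  have fA: "finite A" "A \<subseteq> verts G" and fB: "finite B" "B \<subseteq> verts G" using V by auto
  obtain gA where gA: "emb (induced G A) J gA" "gA ` A \<subseteq> T"
    using emb_small[OF fA(2,1) T(2) cAT T(1) AT] by blast
  have CJ: "C \<subseteq> verts J" using C by (simp add: clique_def)
  obtain gB where gB: "emb (induced G B) J gB" "gB ` B \<subseteq> C"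
    using emb_small[OF fB(2,1) C(2) cBC CJ] Bc C by blast
  have disj: "gA ` A \<inter> gB ` B = {}" using gA gB TC by blast
  have cross: "\<forall>a\<in>A. \<forall>b\<in>B. adj G a b \<longleftrightarrow> adj J (gA a) (gB b)"
  proof (intro ballI)
    fix a b assume a: "a \<in> A" and b: "b \<in> B"
    have "gA a \<in> T" "gB b \<in> C" using gA gB a b by auto
    then show "adj G a b \<longleftrightarrow> adj J (gA a) (gB b)" using cr1 cr2 a b by simp
  qed
  show ?thesis using emb_union[OF V(1,2) gA(1) gB(1) disj cross] contains_emb by blast
qed

lemma eps3_contra:
  assumes eps: "l_EPS l H" and X: "X \<subseteq> verts H" and P: "part_st H (verts H - X) 0 (l - 1)"
    and c: "clique H X \<or> co_star (induced H X)"
  shows False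
proof -
  have l1: "l \<ge> 1" using eps by (simp add: l_EPS_def)
  obtain f where f: "\<forall>v\<in>verts H - X. f v < l - 1"
     "\<forall>i. i < l - 1 \<longrightarrow> clique H {v\<in>verts H - X. f v = i}"
    using P by (auto simp: part_st_def)
  define f' where "f' w = (if w \<in> X then 0 else f w + 1)" for w
  have "\<forall>v\<in>verts H. f' v < l"
  proof
    fix v assume v: "v \<in> verts H"
    show "f' v < l"
    proof (cases "v \<in> X")
      case True then show ?thesis using l1 by (simp add: f'_def)
    next
      case False then have "f v < l - 1" using f v by blast
      then show ?thesis using False by (simp add: f'_def)
    qed
  qed
  moreover have "{v\<in>verts H. f' v = 0} = X" using X by (auto simp: f'_def)
  moreover have "\<forall>i. 1 \<le> i \<and> i < l \<longrightarrow> clique H {v\<in>verts H. f' v = i}"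
  proof (intro allI impI)
    fix i assume i: "1 \<le> i \<and> i < l"
    then have "{v\<in>verts H. f' v = i} = {v\<in>verts H - X. f v = i - 1}" by (auto simp: f'_def)
    moreover have "i - 1 < l - 1" using i by arith
    ultimately show "clique H {v\<in>verts H. f' v = i}" using f by simp
  qed
  ultimately have "\<exists>f :: 'a \<Rightarrow> nat. (\<forall>v\<in>verts H. f v < l) \<and>
          (clique H {v\<in>verts H. f v = 0} \<or> co_star (induced H {v\<in>verts H. f v = 0})) \<and>
          (\<forall>i. 1 \<le> i \<and> i < l \<longrightarrow> clique H {v\<in>verts H. f v = i})"
    using c by (intro exI[of _ f']) simp
  then show False using eps unfolding l_EPS_def by (elim conjE) (rule notE)
qed

lemma avoid:
  assumes wf: "wf_graph H"
    and R: "\<forall>G. wf_graph G \<and> (\<exists>X\<subseteq>verts G. contains_induced J (induced G X) \<and>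
            part_st G (verts G - X) s t) \<longrightarrow> G \<in> Forb H"
    and X: "X \<subseteq> verts H" and P: "part_st H (verts H - X) s t"
  shows "\<not> contains_induced J (induced H X)"
proof
  assume c: "contains_induced J (induced H X)"
  have fin: "finite (verts H)" using wf by (simp add: wf_graph_def)
  obtain H' :: "nat graph" and \<psi> where H': "wf_graph H'" "emb H' H \<psi>" "\<psi> ` verts H' = verts H"
    using nat_copy[OF fin] by blast
  define X' where "X' = {v\<in>verts H'. \<psi> v \<in> X}"
  have e1: "emb (induced H' X') (induced H X) \<psi>"
    by (rule emb_restrict[OF H'(2)]) (use X in \<open>auto simp: X'_def\<close>)
  obtain k where k: "emb (induced H X) J k" using c contains_iff by blast
  have c': "contains_induced J (induced H' X')" using emb_comp[OF e1 k] contains_emb by blast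
  have eq: "{v\<in>verts H'. \<psi> v \<in> verts H - X} = verts H' - X'"
    using H'(3) by (auto simp: X'_def)
  have "part_st H' (verts H' - X') s t" using part_pull[OF H'(2) P] eq by simp
  moreover have "X' \<subseteq> verts H'" by (auto simp: X'_def)
  ultimately have "H' \<in> Forb H" using R H'(1) c' by (meson)
  moreover have "contains_induced H' H" using emb_inv[OF H'(2,3)] contains_emb by blast
  ultimately show False by (simp add: Forb_def)
qed

lemma comb:
  assumes fin: "finite (verts J)"
    and Q: "clique J Q" "\<forall>Q'. clique J Q' \<longrightarrow> card Q' \<le> card Q" "card Q \<ge> 2*n+1"
    and no1: "\<And>a1 a2. a1 \<in> verts J - Q \<Longrightarrow> a2 \<in> verts J - Q \<Longrightarrow> a1 \<noteq> a2 \<Longrightarrow>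
        \<forall>q\<in>Q. \<not> adj J a1 q \<Longrightarrow> \<forall>q\<in>Q. \<not> adj J a2 q \<Longrightarrow> False"
    and no3: "\<And>w q C. w \<in> verts J \<Longrightarrow> q \<in> verts J \<Longrightarrow> w \<noteq> q \<Longrightarrow> \<not> adj J w q \<Longrightarrow>
        clique J C \<Longrightarrow> w \<notin> C \<Longrightarrow> q \<notin> C \<Longrightarrow> card C \<ge> n \<Longrightarrow>
        \<forall>c\<in>C. adj J w c \<Longrightarrow> \<forall>c\<in>C. adj J q c \<Longrightarrow> False"
    and no4: "\<And>w q C. w \<in> verts J \<Longrightarrow> q \<in> verts J \<Longrightarrow> adj J w q \<Longrightarrow>
        clique J C \<Longrightarrow> w \<notin> C \<Longrightarrow> q \<notin> C \<Longrightarrow> card C \<ge> n \<Longrightarrow>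
        \<forall>c\<in>C. \<not> adj J w c \<Longrightarrow> \<forall>c\<in>C. adj J q c \<Longrightarrow> False"
  shows "s_star 1 J"
proof -
  have QV: "Q \<subseteq> verts J" using Q(1) by (simp add: clique_def)
  have finQ: "finite Q" using QV fin finite_subset by blast
  have Qadj: "\<And>x y. x \<in> Q \<Longrightarrow> y \<in> Q \<Longrightarrow> x \<noteq> y \<Longrightarrow> adj J x y" using Q(1) by (simp add: clique_def)
  have anti: "\<forall>q\<in>Q. \<not> adj J w q" if w: "w \<in> verts J - Q" for w
  proof (rule ccontr)
    assume "\<not> (\<forall>q\<in>Q. \<not> adj J w q)"
    then obtain q0 where q0: "q0 \<in> Q" "adj J w q0" by blast
    define N where "N = {q\<in>Q. \<not> adj J w q}"
    have NQ: "N \<subseteq> Q" by (auto simp: N_def)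
    have finN: "finite N" using NQ finQ finite_subset by blast
    show False
    proof (cases "card N \<ge> n")
      case True
      show False
      proof (rule no4[of w q0 N])
        show "w \<in> verts J" using w by simp
        show "q0 \<in> verts J" using q0 QV by auto
        show "adj J w q0" by fact
        show "clique J N" using clique_sub[OF Q(1) NQ] .
        show "w \<notin> N" using w NQ by auto
        show "q0 \<notin> N" using q0 by (simp add: N_def)
        show "card N \<ge> n" by fact
        show "\<forall>c\<in>N. \<not> adj J w c" by (simp add: N_def)
        show "\<forall>c\<in>N. adj J q0 c"
        proof
          fix c assume c: "c \<in> N"
          then have "c \<noteq> q0" using q0 by (auto simp: N_def)
          then show "adj J q0 c" using Qadj q0(1) c NQ by auto
        qed
      qed
    next
      case False
      show False
      proof (cases "N = {}")
        case True
        have "clique J (insert w Q)"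
          unfolding clique_def
        proof (intro conjI ballI impI)
          show "insert w Q \<subseteq> verts J" using w QV by auto
        next
          fix x y assume x: "x \<in> insert w Q" and y: "y \<in> insert w Q" and xy: "x \<noteq> y"
          have wq: "\<And>q. q \<in> Q \<Longrightarrow> adj J w q" using True by (auto simp: N_def)
          show "adj J x y"
          proof (cases "x = w")
            case True then show ?thesis using y xy wq by auto
          next
            case xw: False
            show ?thesis
            proof (cases "y = w")
              case True then show ?thesis using x xw wq adj_sym by (metis insertE)
            next
              case False then show ?thesis using x y xw xy Qadj by auto
            qed
          qed
        qed
        then have "card (insert w Q) \<le> card Q" using Q(2) by blast
        moreover have "card (insert w Q) = card Q + 1" using w finQ by simp
        ultimately show False by simp
      next
        case ne: False
        then obtain q1 where q1: "q1 \<in> N" by blast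
        define C where "C = Q - N"
        have "card C = card Q - card N" using NQ finN by (simp add: C_def card_Diff_subset)
        then have cC: "card C \<ge> n" using False Q(3) by linarith
        show False
        proof (rule no3[of w q1 C])
          show "w \<in> verts J" using w by simp
          show "q1 \<in> verts J" using q1 NQ QV by auto
          show "w \<noteq> q1" using w q1 NQ by auto
          show "\<not> adj J w q1" using q1 by (simp add: N_def)
          show "clique J C" using clique_sub[OF Q(1)] by (simp add: C_def)
          show "w \<notin> C" using w by (simp add: C_def)
          show "q1 \<notin> C" using q1 by (simp add: C_def)
          show "card C \<ge> n" by fact
          show "\<forall>c\<in>C. adj J w c" by (auto simp: C_def N_def)
          show "\<forall>c\<in>C. adj J q1 c"
          proof
            fix c assume c: "c \<in> C"
            then have "c \<noteq> q1" using q1 by (auto simp: C_def)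
            then show "adj J q1 c" using Qadj q1 NQ c by (auto simp: C_def)
          qed
        qed
      qed
    qed
  qed
  show ?thesis
  proof (cases "verts J - Q = {}")
    case True
    then have "verts J = Q" using QV by auto
    then show ?thesis unfolding s_star_def using Q(1)
      by (intro exI[of _ "{}"]) simp
  next
    case False
    then obtain w where w: "w \<in> verts J - Q" by blast
    have eq: "verts J - {w} = Q"
    proof
      show "Q \<subseteq> verts J - {w}" using QV w by auto
      show "verts J - {w} \<subseteq> Q"
      proof
        fix x assume x: "x \<in> verts J - {w}"
        show "x \<in> Q"
        proof (rule ccontr)
          assume "x \<notin> Q"
          then show False using no1[of x w] x w anti by auto
        qed
      qed
    qed
    show ?thesis unfolding s_star_def
    proof (intro exI[of _ "{w}"] conjI)
      show "{w} \<subseteq> verts J" using w by simp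
      show "card {w} \<le> 1" by simp
      show "clique J (verts J - {w}) \<or> stable J (verts J - {w})" using eq Q(1) by simp
      show "\<forall>x\<in>{w}. (\<forall>y\<in>verts J - {w}. adj J x y) \<or> (\<forall>y\<in>verts J - {w}. \<not> adj J x y)"
        using eq anti w by simp
    qed
  qed
qed

lemma no4_lemma:
  assumes wf: "wf_graph H" and eps: "l_EPS l H" and X: "X \<subseteq> verts H"
    and fam: "fam_Cplus (induced H X)" and P: "part_st H (verts H - X) 0 (l - 1)"
    and wq: "w \<in> verts K" "q \<in> verts K" "adj K w q"
    and C: "clique K C" "w \<notin> C" "q \<notin> C" "card C \<ge> card (verts H)"
    and Cw: "\<forall>c\<in>C. \<not> adj K w c" and Cq: "\<forall>c\<in>C. adj K q c" and finK: "finite (verts K)"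
  shows "contains_induced K (induced H X)"
proof -
  define G where "G = induced H X"
  have fin: "finite (verts H)" using wf by (simp add: wf_graph_def)
  have finX: "finite X" using X fin finite_subset by blast
  have ncl: "\<not> clique G X"
  proof
    assume "clique G X" then have "clique H X" using clique_induced[OF X] by (simp add: G_def)
    then show False using eps3_contra[OF eps X P] by blast
  qed
  then obtain v where v: "v \<in> X" "clique G (X - {v})" "card {u\<in>X. adj G v u} \<le> 1"
    using fam by (auto simp: fam_Cplus_def G_def)
  define N where "N = {u\<in>X. adj G v u}"
  have finN: "finite N" using finX by (simp add: N_def)
  have "N \<noteq> {}"
  proof
    assume N0: "N = {}"
    have "co_star G" unfolding co_star_def
      using v N0 by (auto simp: N_def G_def)
    then show False using eps3_contra[OF eps X P] by (simp add: G_def)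
  qed
  then obtain u where u: "u \<in> N" by blast
  have c1: "card N \<le> Suc 0" using v(3) by (simp add: N_def)
  then have all1: "\<forall>a1\<in>N. \<forall>a2\<in>N. a1 = a2" by (simp only: card_le_Suc0_iff_eq[OF finN])
  have Nu: "\<And>b. b \<in> X \<Longrightarrow> adj G v b \<Longrightarrow> b = u"
  proof -
    fix b assume "b \<in> X" "adj G v b"
    then have "b \<in> N" by (simp add: N_def)
    then show "b = u" using u all1 by blast
  qed
  have uX: "u \<in> X" and avu: "adj G v u" using u by (auto simp: N_def)
  have uv: "u \<noteq> v" using avu by auto
  define A where "A = {v, u}"
  define B where "B = X - {v, u}"
  define gA where "gA z = (if z = v then w else q)" for z
  have wq_ne: "w \<noteq> q" using wq(3) by auto
  have VG: "verts G = A \<union> B" "A \<inter> B = {}" using v uX by (auto simp: G_def A_def B_def)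
  have eA: "emb (induced G A) K gA"
    unfolding emb_def
  proof (intro conjI ballI)
    show "inj_on gA (verts (induced G A))" using wq_ne uv by (simp add: A_def gA_def inj_on_def)
    show "gA ` verts (induced G A) \<subseteq> verts K" using wq by (auto simp: A_def gA_def)
  next
    fix x y assume x: "x \<in> verts (induced G A)" and y: "y \<in> verts (induced G A)"
    then have xy: "x \<in> A" "y \<in> A" by auto
    have e: "adj (induced G A) x y \<longleftrightarrow> adj G x y" using adj_induced[OF xy] .
    have avu': "adj G u v" using avu adj_sym by metis
    have wq': "adj K q w" using wq(3) adj_sym by metis
    have "adj G x y \<longleftrightarrow> adj K (gA x) (gA y)"
    proof -
      consider "x = v" "y = v" | "x = v" "y = u" | "x = u" "y = v" | "x = u" "y = u"
        using xy by (auto simp: A_def)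
      then show ?thesis
      proof cases
        case 1 then show ?thesis by simp
      next
        case 2 then show ?thesis using avu wq(3) uv by (simp add: gA_def)
      next
        case 3 then show ?thesis using avu' wq' uv by (simp add: gA_def)
      next
        case 4 then show ?thesis by simp
      qed
    qed
    then show "adj (induced G A) x y \<longleftrightarrow> adj K (gA x) (gA y)" using e by simp
  qed
  have BX: "B \<subseteq> X - {v}" by (auto simp: B_def)
  have clB: "clique G B" using clique_sub[OF v(2) BX] .
  have cBC: "card B \<le> card C"
  proof -
    have "B \<subseteq> verts H" using X by (auto simp: B_def)
    then have "card B \<le> card (verts H)" using card_mono[OF fin] by blast
    then show ?thesis using C(4) by linarith
  qed
  have CK: "C \<subseteq> verts K" using C(1) by (simp add: clique_def)
  have finC: "finite C" using CK finK finite_subset by blast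
  have finB: "finite B" using finX by (simp add: B_def)
  obtain gB where gB: "emb (induced G B) K gB" "gB ` B \<subseteq> C"
    using emb_small[of B G C K] finB finC cBC CK clB C(1) by (auto simp: G_def B_def)
  have disj: "gA ` A \<inter> gB ` B = {}" using gB(2) C(2,3) by (auto simp: A_def gA_def)
  have cross: "\<forall>a\<in>A. \<forall>b\<in>B. adj G a b \<longleftrightarrow> adj K (gA a) (gB b)"
  proof (intro ballI)
    fix a b assume a: "a \<in> A" and b: "b \<in> B"
    have gb: "gB b \<in> C" using gB(2) b by auto
    have bX: "b \<in> X" "b \<noteq> v" "b \<noteq> u" using b by (auto simp: B_def)
    show "adj G a b \<longleftrightarrow> adj K (gA a) (gB b)"
    proof (cases "a = v")
      case True
      have "\<not> adj G v b" using Nu bX by blast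
      moreover have "\<not> adj K w (gB b)" using Cw gb by blast
      ultimately show ?thesis using True by (simp add: gA_def)
    next
      case False
      then have au: "a = u" using a by (simp add: A_def)
      have "u \<in> X - {v}" "b \<in> X - {v}" using uX uv bX by auto
      then have "adj G u b" using v(2) bX unfolding clique_def by auto
      moreover have "adj K q (gB b)" using Cq gb by blast
      ultimately show ?thesis using au uv by (simp add: gA_def)
    qed
  qed
  have "emb G K (\<lambda>x. if x \<in> A then gA x else gB x)"
    using emb_union[OF VG eA gB(1) disj cross] .
  then show ?thesis unfolding G_def by (rule contains_emb)
qed

lemma clique_pair: "a1 \<in> verts K \<Longrightarrow> a2 \<in> verts K \<Longrightarrow> adj K a1 a2 \<Longrightarrow> clique K {a1, a2}"
  unfolding clique_def using adj_sym by fastforce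

lemma stable_pair: "a1 \<in> verts K \<Longrightarrow> a2 \<in> verts K \<Longrightarrow> \<not> adj K a1 a2 \<Longrightarrow> stable K {a1, a2}"
  unfolding stable_def using adj_sym by fastforce

lemma card_pair_ge: "card A \<le> 2 \<Longrightarrow> a1 \<noteq> a2 \<Longrightarrow> card A \<le> card {a1, a2}"
  by simp

lemma crit1:
  assumes wf: "wf_graph H" and eps: "l_EPS l H"
  shows "critical 1 H"
proof -
  have fin: "finite (verts H)" using wf by (simp add: wf_graph_def)
  define n where "n = card (verts H)"
  have cardX: "\<And>X. X \<subseteq> verts H \<Longrightarrow> card X \<le> n" using card_mono[OF fin] by (simp add: n_def)
  have finX: "\<And>X. X \<subseteq> verts H \<Longrightarrow> finite X" using fin finite_subset by blast
  obtain r where r: "\<forall>(V::nat set) E. finite V \<and> card V \<ge> r \<longrightarrow>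
      (\<exists>R \<subseteq> V. card R = 2*n+1 \<and> Ramsey.clique R E \<or> card R = n \<and> indep R E)"
    using ramsey2[of "2*n+1" n] by blast
  have chi: "chi_c (Forb H) = l" using chi_c_eq[OF wf eps] .
  have eps1: "\<And>s. 1 \<le> s \<Longrightarrow> s \<le> l \<Longrightarrow> part_st H (verts H) s (l - s)"
    using eps by (simp add: l_EPS_def)
  show ?thesis unfolding critical_def
  proof (intro exI[of _ r] ballI impI)
    fix K assume K: "K \<in> red (Forb H)" and cK: "r \<le> card (verts K)"
    have wfK: "wf_graph K" using K by (simp add: red_def)
    have finK: "finite (verts K)" using wfK by (simp add: wf_graph_def)
    obtain s where s: "s + 1 \<le> l" and RK: "\<forall>G. wf_graph G \<and> (\<exists>X\<subseteq>verts G. contains_induced K (induced G X) \<and>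
            part_st G (verts G - X) s (l - 1 - s)) \<longrightarrow> G \<in> Forb H"
      using K unfolding red_def reduced_def Let_def chi by blast
    have av: "\<And>X. X \<subseteq> verts H \<Longrightarrow> part_st H (verts H - X) s (l - 1 - s) \<Longrightarrow>
        \<not> contains_induced K (induced H X)"
      using avoid[OF wf RK] by blast
    obtain R where R: "R \<subseteq> verts K" "card R = 2*n+1 \<and> Ramsey.clique R (edges K) \<or> card R = n \<and> indep R (edges K)"
      using r finK cK by blast
    have finR: "finite R" using R(1) finK finite_subset by blast
    have stab_bad: False if T: "T \<subseteq> verts K" "finite T" "card T \<ge> n" "stable K T" for T
    proof -
      have "part_st H (verts H) (s+1) (l - (s+1))" using eps1 s by simp
      then obtain f where f: "\<forall>v\<in>verts H. f v < (s+1) + (l - (s+1))"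
        "\<forall>i<s+1. stable H {v\<in>verts H. f v = i}"
        "\<forall>i. s+1 \<le> i \<and> i < (s+1) + (l - (s+1)) \<longrightarrow> clique H {v\<in>verts H. f v = i}"
        unfolding part_st_def by blast
      define X where "X = {v\<in>verts H. f v = s}"
      have XH: "X \<subseteq> verts H" by (auto simp: X_def)
      have stX: "stable H X" using f(2) by (simp add: X_def)
      have P: "part_st H (verts H - X) s (l - 1 - s)"
        unfolding X_def by (rule part_remove[OF f]) (use s in auto)
      obtain g where "emb (induced H X) K g"
        using emb_small[OF XH finX[OF XH] T(2) _ T(1)] cardX[OF XH] T(3) stX T(4) by fastforce
      then have "contains_induced K (induced H X)" by (rule contains_emb)
      then show False using av[OF XH P] by simp
    qed
    have clq_bad: False if s1: "s \<ge> 1" and T: "T \<subseteq> verts K" "finite T" "card T \<ge> n" "clique K T" for T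
    proof -
      have "part_st H (verts H) s (l - s)" using eps1 s s1 by simp
      then obtain f where f: "\<forall>v\<in>verts H. f v < s + (l - s)"
        "\<forall>i<s. stable H {v\<in>verts H. f v = i}"
        "\<forall>i. s \<le> i \<and> i < s + (l - s) \<longrightarrow> clique H {v\<in>verts H. f v = i}"
        unfolding part_st_def by blast
      define X where "X = {v\<in>verts H. f v = s}"
      have XH: "X \<subseteq> verts H" by (auto simp: X_def)
      have clX: "clique H X" using f(3) s by (simp add: X_def)
      have P: "part_st H (verts H - X) s (l - 1 - s)"
        unfolding X_def by (rule part_remove[OF f]) (use s in auto)
      obtain g where "emb (induced H X) K g"
        using emb_small[OF XH finX[OF XH] T(2) _ T(1)] cardX[OF XH] T(3) clX T(4) by fastforce
      then have "contains_induced K (induced H X)" by (rule contains_emb)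
      then show False using av[OF XH P] by simp
    qed
    have Rcl: "card R = 2*n+1" "clique K R"
    proof -
      have "\<not> (card R = n \<and> indep R (edges K))"
      proof
        assume a: "card R = n \<and> indep R (edges K)"
        then have "stable K R" using R(1) unfolding stable_def indep_def adj_def by auto
        then show False using stab_bad[OF R(1) finR] a by simp
      qed
      then have a: "card R = 2*n+1" "Ramsey.clique R (edges K)" using R(2) by auto
      then show "card R = 2*n+1" by simp
      show "clique K R" using a(2) R(1) by (simp add: Defs.clique_def Ramsey.clique_def adj_def)
    qed
    have s0: "s = 0"
    proof (rule ccontr)
      assume "s \<noteq> 0"
      then show False using clq_bad[OF _ R(1) finR _ Rcl(2)] Rcl(1) by simp
    qed
    have av0: "\<And>X. X \<subseteq> verts H \<Longrightarrow> part_st H (verts H - X) 0 (l - 1) \<Longrightarrow>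
        \<not> contains_induced K (induced H X)"
      using av s0 by simp
    obtain Q where Q: "clique K Q" "\<forall>Q'. clique K Q' \<longrightarrow> card Q' \<le> card Q"
    proof -
      have "\<forall>Q'. clique K Q' \<longrightarrow> card Q' < card (verts K) + 1"
      proof (intro allI impI)
        fix Q' assume "clique K Q'"
        then have "Q' \<subseteq> verts K" by (simp add: clique_def)
        then have "card Q' \<le> card (verts K)" by (rule card_mono[OF finK])
        then show "card Q' < card (verts K) + 1" by simp
      qed
      then have "\<exists>x. clique K x \<and> (\<forall>y. clique K y \<longrightarrow> card y \<le> card x)"
        by (rule Lattices_Big.ex_has_greatest_nat[of "clique K" R card, OF Rcl(2)])
      then show ?thesis using that by blast
    qed
    have QK: "Q \<subseteq> verts K" using Q(1) by (simp add: clique_def)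
    have finQ: "finite Q" using QK finK finite_subset by blast
    have "card R \<le> card Q" using Q(2) Rcl(2) by blast
    then have cQ: "card Q \<ge> 2*n+1" using Rcl(1) by simp
    obtain X1 where X1: "X1 \<subseteq> verts H" "fam_S2_or_C (induced H X1)" "part_st H (verts H - X1) 0 (l - 1)"
      using eps by (auto simp: l_EPS_def EPS2_part_def)
    obtain X2 where X2: "X2 \<subseteq> verts H" "fam_K2_or_C (induced H X2)" "part_st H (verts H - X2) 0 (l - 1)"
      using eps by (auto simp: l_EPS_def EPS2_part_def)
    obtain X3 where X3: "X3 \<subseteq> verts H" "fam_S2_join_C (induced H X3)" "part_st H (verts H - X3) 0 (l - 1)"
      using eps by (auto simp: l_EPS_def EPS2_part_def)
    obtain X4 where X4: "X4 \<subseteq> verts H" "fam_Cplus (induced H X4)" "part_st H (verts H - X4) 0 (l - 1)"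
      using eps by (auto simp: l_EPS_def EPS2_part_def)
    show "s_star 1 K"
    proof (rule comb[OF finK Q cQ])
      fix a1 a2 assume a: "a1 \<in> verts K - Q" "a2 \<in> verts K - Q" "a1 \<noteq> a2"
        "\<forall>q\<in>Q. \<not> adj K a1 q" "\<forall>q\<in>Q. \<not> adj K a2 q"
      have TK: "{a1, a2} \<subseteq> verts K" "finite {a1, a2}" "{a1, a2} \<inter> Q = {}" using a by auto
      have cr2: "\<forall>t\<in>{a1,a2}. \<forall>c\<in>Q. adj K t c \<longleftrightarrow> False" using a by auto
      show False
      proof (cases "adj K a1 a2")
        case True
        obtain A B where AB: "A \<inter> B = {}" "A \<union> B = verts (induced H X2)" "clique (induced H X2) A"
          "card A \<le> 2" "clique (induced H X2) B" "\<forall>a\<in>A. \<forall>b\<in>B. \<not> adj (induced H X2) a b"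
          using X2(2) unfolding fam_K2_or_C_def by blast
        have cB: "card B \<le> card Q" using cardX[of B] AB(2) X2(1) cQ by auto
        have "contains_induced K (induced H X2)"
        proof (rule fam_embed[of _ A B K "{a1,a2}" Q False])
          show "verts (induced H X2) = A \<union> B" using AB by simp
          show "A \<inter> B = {}" by fact
          show "finite (verts (induced H X2))" using finX[OF X2(1)] by simp
          show "clique (induced H X2) B" by fact
          show "clique (induced H X2) A \<and> clique K {a1, a2} \<or> stable (induced H X2) A \<and> stable K {a1, a2}"
            using AB(3) clique_pair[OF _ _ True] a by auto
          show "card A \<le> card {a1, a2}" using AB(4) a(3) by simp
        qed (use cB TK Q(1) finQ cr2 AB(6) in auto)
        then show False using av0[OF X2(1,3)] by simp
      next
        case False
        obtain A B where AB: "A \<inter> B = {}" "A \<union> B = verts (induced H X1)" "stable (induced H X1) A"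
          "card A \<le> 2" "clique (induced H X1) B" "\<forall>a\<in>A. \<forall>b\<in>B. \<not> adj (induced H X1) a b"
          using X1(2) unfolding fam_S2_or_C_def by blast
        have cB: "card B \<le> card Q" using cardX[of B] AB(2) X1(1) cQ by auto
        have "contains_induced K (induced H X1)"
        proof (rule fam_embed[of _ A B K "{a1,a2}" Q False])
          show "verts (induced H X1) = A \<union> B" using AB by simp
          show "A \<inter> B = {}" by fact
          show "finite (verts (induced H X1))" using finX[OF X1(1)] by simp
          show "clique (induced H X1) B" by fact
          show "clique (induced H X1) A \<and> clique K {a1, a2} \<or> stable (induced H X1) A \<and> stable K {a1, a2}"
            using AB(3) stable_pair[OF _ _ False] a by auto
          show "card A \<le> card {a1, a2}" using AB(4) a(3) by simp
        qed (use cB TK Q(1) finQ cr2 AB(6) in auto)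
        then show False using av0[OF X1(1,3)] by simp
      qed
    next
      fix w q C assume a: "w \<in> verts K" "q \<in> verts K" "w \<noteq> q" "\<not> adj K w q"
        "clique K C" "w \<notin> C" "q \<notin> C" "n \<le> card C" "\<forall>c\<in>C. adj K w c" "\<forall>c\<in>C. adj K q c"
      have CK: "C \<subseteq> verts K" using a(5) by (simp add: clique_def)
      have finC: "finite C" using CK finK finite_subset by blast
      have TK: "{w, q} \<subseteq> verts K" "finite {w, q}" "{w, q} \<inter> C = {}" using a by auto
      have cr2: "\<forall>t\<in>{w,q}. \<forall>c\<in>C. adj K t c \<longleftrightarrow> True" using a by auto
      obtain A B where AB: "A \<inter> B = {}" "A \<union> B = verts (induced H X3)" "stable (induced H X3) A"
        "card A \<le> 2" "clique (induced H X3) B" "\<forall>a\<in>A. \<forall>b\<in>B. adj (induced H X3) a b"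
        using X3(2) unfolding fam_S2_join_C_def by blast
      have cB: "card B \<le> card C" using cardX[of B] AB(2) X3(1) a(8) by fastforce
      have "contains_induced K (induced H X3)"
      proof (rule fam_embed[of _ A B K "{w,q}" C True])
        show "verts (induced H X3) = A \<union> B" using AB by simp
        show "A \<inter> B = {}" by fact
        show "finite (verts (induced H X3))" using finX[OF X3(1)] by simp
        show "clique (induced H X3) B" by fact
        show "clique (induced H X3) A \<and> clique K {w, q} \<or> stable (induced H X3) A \<and> stable K {w, q}"
          using AB(3) stable_pair[OF a(1,2,4)] by auto
        show "card A \<le> card {w, q}" using AB(4) a(3) by simp
      qed (use cB TK a(5) finC cr2 AB(6) in auto)
      then show False using av0[OF X3(1,3)] by simp
    next
      fix w q C assume a: "w \<in> verts K" "q \<in> verts K" "adj K w q"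
        "clique K C" "w \<notin> C" "q \<notin> C" "n \<le> card C" "\<forall>c\<in>C. \<not> adj K w c" "\<forall>c\<in>C. adj K q c"
      have "contains_induced K (induced H X4)"
        using no4_lemma[OF wf eps X4(1,2,3) a(1,2,3) a(4,5,6) _ a(8,9) finK] a(7) by (simp add: n_def)
      then show False using av0[OF X4(1,3)] by simp
    qed
  qed
qed


definition costar_graph :: "nat \<Rightarrow> nat graph" where
  "costar_graph m = ({0..m}, {e. \<exists>i j. e = {i, j} \<and> 1 \<le> i \<and> i \<le> m \<and> 1 \<le> j \<and> j \<le> m \<and> i \<noteq> j})"

lemma costar_verts: "verts (costar_graph m) = {0..m}"
  by (simp add: costar_graph_def verts_def)

lemma costar_adj: "adj (costar_graph m) i j \<longleftrightarrow> i \<noteq> j \<and> 1 \<le> i \<and> i \<le> m \<and> 1 \<le> j \<and> j \<le> m"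
proof
  assume "adj (costar_graph m) i j"
  then obtain a b where ab: "i \<noteq> j" "{i, j} = {a, b}" "1 \<le> a" "a \<le> m" "1 \<le> b" "b \<le> m"
    by (auto simp: adj_def costar_graph_def edges_def)
  then have "(i = a \<and> j = b) \<or> (i = b \<and> j = a)" by (simp add: doubleton_eq_iff)
  then show "i \<noteq> j \<and> 1 \<le> i \<and> i \<le> m \<and> 1 \<le> j \<and> j \<le> m" using ab by auto
next
  assume "i \<noteq> j \<and> 1 \<le> i \<and> i \<le> m \<and> 1 \<le> j \<and> j \<le> m"
  then show "adj (costar_graph m) i j" by (auto simp: adj_def costar_graph_def edges_def)
qed

lemma costar_wf: "wf_graph (costar_graph m)"
  unfolding wf_graph_def costar_verts
  by (auto simp: costar_graph_def edges_def)

lemma costar_not0: "m \<ge> 2 \<Longrightarrow> \<not> s_star 0 (costar_graph m)"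
proof
  assume m: "m \<ge> 2" and st: "s_star 0 (costar_graph m)"
  then obtain S where S: "S \<subseteq> verts (costar_graph m)" "card S \<le> 0"
    "clique (costar_graph m) (verts (costar_graph m) - S) \<or> stable (costar_graph m) (verts (costar_graph m) - S)"
    unfolding s_star_def by blast
  have "finite S" using S(1) finite_subset by (auto simp: costar_verts)
  then have "S = {}" using S(2) by simp
  then have c: "clique (costar_graph m) {0..m} \<or> stable (costar_graph m) {0..m}"
    using S(3) by (simp add: costar_verts)
  have "\<not> adj (costar_graph m) 0 1" by (simp add: costar_adj)
  moreover have "adj (costar_graph m) 1 2" using m by (simp add: costar_adj)
  ultimately show False using c m unfolding clique_def stable_def
    by (metis atLeastAtMost_iff le0 one_le_numeral le_trans zero_neq_one one_le_numeral order.trans)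
qed

lemma costar_red:
  assumes wf: "wf_graph H" and eps: "l_EPS l H"
  shows "costar_graph m \<in> red (Forb H)"
proof -
  define K where "K = costar_graph m"
  have chi: "chi_c (Forb H) = l" using chi_c_eq[OF wf eps] .
  have l1: "l \<ge> 1" using eps by (simp add: l_EPS_def)
  have main: "G \<in> Forb H" if G: "wf_graph (G :: nat graph)" "X \<subseteq> verts G" "contains_induced K (induced G X)"
      "part_st G (verts G - X) 0 (l - 1)" for G X
  proof -
    have "\<not> contains_induced G H"
    proof
      assume "contains_induced G H"
      then obtain g where g: "emb H G g" using contains_iff by blast
      obtain k where k: "emb (induced G X) K k" using G(3) contains_iff by blast
      define P0 where "P0 = {w\<in>verts H. g w \<in> X}"
      have P0H: "P0 \<subseteq> verts H" by (auto simp: P0_def)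
      have eqP: "{w\<in>verts H. g w \<in> verts G - X} = verts H - P0"
        using g by (auto simp: P0_def emb_def)
      have P: "part_st H (verts H - P0) 0 (l - 1)" using part_pull[OF g G(4)] eqP by simp
      have e1: "emb (induced H P0) (induced G X) g"
        by (rule emb_restrict[OF g P0H]) (use G(2) in \<open>auto simp: P0_def\<close>)
      define h where "h = k \<circ> g"
      have e: "emb (induced H P0) K h" unfolding h_def by (rule emb_comp[OF e1 k])
      have hinj: "inj_on h P0" using e by (simp add: emb_def)
      have hK: "\<And>x. x \<in> P0 \<Longrightarrow> h x \<le> m" using e by (auto simp: emb_def K_def costar_verts)
      have hadj: "\<And>x y. x \<in> P0 \<Longrightarrow> y \<in> P0 \<Longrightarrow> adj (induced H P0) x y \<longleftrightarrow> adj K (h x) (h y)"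
        using e by (simp add: emb_def)
      have adjP: "adj (induced H P0) x y" if "x \<in> P0" "y \<in> P0" "x \<noteq> y" "h x \<noteq> 0" "h y \<noteq> 0" for x y
      proof -
        have "h x \<noteq> h y" using hinj that by (meson inj_onD)
        then have "adj K (h x) (h y)" using that hK by (simp add: K_def costar_adj)
        then show ?thesis using hadj that by simp
      qed
      have "clique H P0 \<or> co_star (induced H P0)"
      proof (cases "\<exists>w0\<in>P0. h w0 = 0")
        case True
        then obtain w0 where w0: "w0 \<in> P0" "h w0 = 0" by blast
        have nz: "h x \<noteq> 0" if "x \<in> P0" "x \<noteq> w0" for x
          using hinj that w0 by (metis inj_onD)
        have "co_star (induced H P0)"
          unfolding co_star_def
        proof (intro bexI[of _ w0] conjI ballI)
          show "w0 \<in> verts (induced H P0)" using w0 by simp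
          show "clique (induced H P0) (verts (induced H P0) - {w0})"
            unfolding clique_def using adjP nz by auto
        next
          fix u assume u: "u \<in> verts (induced H P0)"
          have "\<not> adj K (h w0) (h u)" using w0 by (simp add: K_def costar_adj)
          then show "\<not> adj (induced H P0) w0 u" using hadj w0 u by simp
        qed
        then show ?thesis by simp
      next
        case False
        have "clique (induced H P0) P0" unfolding clique_def using adjP False by auto
        then have "clique H P0" using clique_induced[OF P0H] by blast
        then show ?thesis by simp
      qed
      then show False using eps3_contra[OF eps P0H P] by blast
    qed
    then show ?thesis using G(1) by (simp add: Forb_def)
  qed
  have "reduced (Forb H) K"
    unfolding reduced_def Let_def chi
  proof (intro exI[of _ 0] conjI allI impI)
    show "0 + 1 \<le> l" using l1 by simp
  next
    fix G :: "nat graph" assume a: "wf_graph G \<and> (\<exists>X\<subseteq>verts G. contains_induced K (induced G X) \<and>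
          part_st G (verts G - X) 0 (l - 1 - 0))"
    then obtain X where "X \<subseteq> verts G" "contains_induced K (induced G X)" "part_st G (verts G - X) 0 (l - 1)"
      by auto
    then show "G \<in> Forb H" using main a by blast
  qed
  then show ?thesis using costar_wf by (simp add: red_def K_def)
qed

lemma notcrit0:
  assumes wf: "wf_graph H" and eps: "l_EPS l H"
  shows "\<not> critical 0 H"
proof
  assume "critical 0 H"
  then obtain n0 where c: "\<forall>K\<in>red (Forb H). card (verts K) \<ge> n0 \<longrightarrow> s_star 0 K"
    unfolding critical_def by blast
  define m where "m = n0 + 2"
  have "costar_graph m \<in> red (Forb H)" using costar_red[OF wf eps] .
  moreover have "card (verts (costar_graph m)) \<ge> n0" by (simp add: costar_verts m_def)
  ultimately have "s_star 0 (costar_graph m)" using c by blast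
  then show False using costar_not0[of m] by (simp add: m_def)
qed

theorem lemma3p11:
  fixes H :: "'a graph"
  assumes "wf_graph H" and "EPS_graph H"
  shows "critical 1 H \<and> \<not> critical 0 H"
proof -
  obtain l where eps: "l_EPS l H" using assms(2) by (auto simp: EPS_graph_def)
  show ?thesis using crit1[OF assms(1) eps] notcrit0[OF assms(1) eps] by simp
qed

end
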